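(* For each $p$, let $n=n(p)$ and let $r_1,\dots,r_n$ be independent random vectors in $\mathbb{R}^p$; let $M=\sum_{i=1}^nr_ir_i^*$ and $m_p(z)=\frac1p\operatorname{trace}((M-z\,\mathrm{Id}_p)^{-1})$. Assume $p/n$ remains bounded away from $0$. Then for every $z\in\mathbb{C}^+$, $m_p(z)-\mathbf{E}(m_p(z))\to0$ a.s., and moreover, for every $\alpha>0$, $$\frac{\sqrt p}{(\log p)^{(1+\alpha)/2}}\,|m_p(z)-\mathbf{E}(m_p(z))|\to0\quad\text{a.s.}$$
   Context: $\mathbb{C}^+=\{z\in\mathbb{C}:\operatorname{Im}z>0\}$. *)

theory Defs
  imports "HOL-Probability.Probability" "Jordan_Normal_Form.Matrix"
begin

definition mat_trace :: "'a::comm_monoid_add mat \<Rightarrow> 'a" where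
  "mat_trace A = (\<Sum>i<dim_row A. A $$ (i,i))"

definition mat_inv :: "'a::semiring_1 mat \<Rightarrow> 'a mat" where
  "mat_inv A = (THE B. B \<in> carrier_mat (dim_row A) (dim_row A) \<and>
                        A * B = 1\<^sub>m (dim_row A) \<and> B * A = 1\<^sub>m (dim_row A))"

text \<open>The p x p matrix M = sum_{i<n} r_i r_i^*, for real vectors r_i in R^p
  (given as functions, only coordinates < p matter).\<close>
definition sample_mat :: "nat \<Rightarrow> nat \<Rightarrow> (nat \<Rightarrow> nat \<Rightarrow> real) \<Rightarrow> real mat" where
  "sample_mat p n r = mat p p (\<lambda>(j,k). \<Sum>i<n. r i j * r i k)"

definition stieltjes_tr :: "nat \<Rightarrow> real mat \<Rightarrow> complex \<Rightarrow> complex" where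
  "stieltjes_tr p M z =
     mat_trace (mat_inv (map_mat complex_of_real M - z \<cdot>\<^sub>m 1\<^sub>m p)) / of_nat p"

end

theory Submission
  imports Defs "Jordan_Normal_Form.Determinant"
begin

unbundle no vec_syntax
unbundle no inner_syntax


lemma bdd_integrable:
  fixes h :: "'a \<Rightarrow> real"
  assumes "prob_space N" "h \<in> borel_measurable N" "\<And>y. y \<in> space N \<Longrightarrow> \<bar>h y\<bar> \<le> K"
  shows "integrable N h"
proof -
  interpret prob_space N by fact
  show ?thesis
    by (rule integrable_const_bound[where B=K]) (use assms in auto)
qed

lemma bdd_integral_abs:
  fixes h :: "'a \<Rightarrow> real"
  assumes "prob_space N" "h \<in> borel_measurable N" "\<And>y. y \<in> space N \<Longrightarrow> \<bar>h y\<bar> \<le> K"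
  shows "\<bar>integral\<^sup>L N h\<bar> \<le> K"
proof -
  interpret prob_space N by fact
  have i: "integrable N h" using bdd_integrable[OF assms] .
  have "integral\<^sup>L N h \<le> K"
    by (rule integral_le_const[OF i]) (use assms(3) in \<open>auto intro!: AE_I2 simp: abs_le_iff\<close>)
  moreover have "- K \<le> integral\<^sup>L N h"
  proof (rule integral_ge_const[OF i], rule AE_I2)
    fix x assume "x \<in> space N"
    from assms(3)[OF this] show "- K \<le> h x" by linarith
  qed
  ultimately show ?thesis by auto
qed

lemma space_PiM_upd:
  assumes "x \<in> space (PiM I M)" "y \<in> space (M i)"
  shows "x(i:=y) \<in> space (PiM (insert i I) M)"
  using measurable_space[OF measurable_add_dim, of "(x,y)" I M i] assms
  by (simp add: space_pair_measure)

lemma space_PiM_upd':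
  assumes "x \<in> space (PiM I M)" "y \<in> space (M i)" "i \<in> I"
  shows "x(i:=y) \<in> space (PiM I M)"
  using space_PiM_upd[OF assms(1,2)] assms(3) by (simp add: insert_absorb)

lemma mcdiarmid_mgf:
  fixes M :: "nat \<Rightarrow> 'b measure" and f :: "(nat \<Rightarrow> 'b) \<Rightarrow> real"
  assumes P: "\<And>i. prob_space (M i)"
  shows "f \<in> borel_measurable (PiM {..<n} M) \<Longrightarrow> (\<And>x. x \<in> space (PiM {..<n} M) \<Longrightarrow> \<bar>f x\<bar> \<le> B) \<Longrightarrow>
     (\<And>i x y. i < n \<Longrightarrow> x \<in> space (PiM {..<n} M) \<Longrightarrow> y \<in> space (M i) \<Longrightarrow> \<bar>f x - f (x(i:=y))\<bar> \<le> c i) \<Longrightarrow>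
     l > 0 \<Longrightarrow>
     (\<integral>x. exp (l * (f x - (\<integral>y. f y \<partial>PiM {..<n} M))) \<partial>PiM {..<n} M) \<le> exp (l^2 * (\<Sum>i<n. (c i)^2) / 2)"
proof (induction n arbitrary: f)
  case 0
  then show ?case by (simp add: PiM_empty lebesgue_integral_count_space_finite)
next
  case (Suc n)
  interpret PS: product_prob_space M
    by (simp add: P product_prob_space.intro product_prob_space_axioms.intro product_sigma_finite.intro prob_space_imp_sigma_finite)
  interpret Mn: prob_space "M n" by (rule P)
  let ?I = "{..<n}"
  have ins: "{..<Suc n} = insert n {..<n}" by auto
  have nI: "n \<notin> ?I" by auto
  have fm: "f \<in> borel_measurable (PiM (insert n ?I) M)" using Suc.prems(1) ins by simp
  have fB: "\<And>x. x \<in> space (PiM (insert n ?I) M) \<Longrightarrow> \<bar>f x\<bar> \<le> B" using Suc.prems(2) ins by simp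
  have fc: "\<And>i x y. i < Suc n \<Longrightarrow> x \<in> space (PiM (insert n ?I) M) \<Longrightarrow> y \<in> space (M i) \<Longrightarrow> \<bar>f x - f (x(i:=y))\<bar> \<le> c i"
    by (fact Suc.prems(3)[unfolded ins])
  have probI: "prob_space (PiM ?I M)" by (simp add: P prob_space_PiM)
  have probS: "prob_space (PiM (insert n ?I) M)" by (simp add: P prob_space_PiM)
  have upd: "\<And>x y. x \<in> space (PiM ?I M) \<Longrightarrow> y \<in> space (M n) \<Longrightarrow> x(n:=y) \<in> space (PiM (insert n ?I) M)"
    by (rule space_PiM_upd)
  have fcomp: "(\<lambda>(x,y). f (x(n:=y))) \<in> borel_measurable (PiM ?I M \<Otimes>\<^sub>M M n)"
    using measurable_comp[OF measurable_add_dim fm] by (simp add: comp_def case_prod_unfold)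
  have fcomp1: "(\<lambda>y. f (x(n:=y))) \<in> borel_measurable (M n)" if x: "x \<in> space (PiM ?I M)" for x
    using measurable_Pair2[OF fcomp x] by simp
  define g where "g x = (\<integral>y. f (x(n:=y)) \<partial>M n)" for x
  have gm: "g \<in> borel_measurable (PiM ?I M)"
    unfolding g_def using sigma_finite_measure.borel_measurable_lebesgue_integral[OF prob_space_imp_sigma_finite[OF P[of n]] fcomp] .
  have gB: "\<bar>g x\<bar> \<le> B" if x: "x \<in> space (PiM ?I M)" for x
    unfolding g_def by (rule bdd_integral_abs[OF P fcomp1[OF x]]) (auto intro!: fB upd x)
  have gc: "\<bar>g x - g (x(i:=y))\<bar> \<le> c i" if i: "i < n" and x: "x \<in> space (PiM ?I M)" and y: "y \<in> space (M i)" for i x y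
  proof -
    have x': "x(i:=y) \<in> space (PiM ?I M)" using space_PiM_upd'[OF x y] i by simp
    have "g x - g (x(i:=y)) = (\<integral>w. f (x(n:=w)) - f ((x(i:=y))(n:=w)) \<partial>M n)"
      unfolding g_def
      by (rule Bochner_Integration.integral_diff[symmetric];
          rule bdd_integrable[OF P _ fB]; auto intro!: fcomp1 x x' upd)
    also have "\<bar>\<dots>\<bar> \<le> c i"
    proof (rule bdd_integral_abs[OF P])
      show "(\<lambda>w. f (x(n := w)) - f ((x(i := y))(n := w))) \<in> borel_measurable (M n)"
        using fcomp1[OF x] fcomp1[OF x'] by measurable
      fix w assume w: "w \<in> space (M n)"
      have e: "(x(i := y))(n := w) = (x(n:=w))(i:=y)" using i by (auto simp: fun_upd_twist)
      show "\<bar>f (x(n := w)) - f ((x(i := y))(n := w))\<bar> \<le> c i"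
        unfolding e by (rule fc) (use i w y in \<open>auto intro!: upd x\<close>)
    qed
    finally show ?thesis .
  qed
  have IH: "(\<integral>x. exp (l * (g x - (\<integral>y. g y \<partial>PiM ?I M))) \<partial>PiM ?I M) \<le> exp (l^2 * (\<Sum>i<n. (c i)^2) / 2)"
    by (rule Suc.IH[OF gm gB gc Suc.prems(4)])
  have fint: "integrable (PiM (insert n ?I) M) f" by (rule bdd_integrable[OF probS fm fB])
  have Ef: "(\<integral>y. f y \<partial>PiM (insert n ?I) M) = (\<integral>x. g x \<partial>PiM ?I M)"
    unfolding g_def by (rule PS.product_integral_insert[OF _ nI fint]) simp
  define Eg where "Eg = (\<integral>x. g x \<partial>PiM ?I M)"
  define K where "K = exp (l^2 * (c n)^2 / 2)"
  have inner: "(\<integral>y. exp (l * (f (x(n:=y)) - g x)) \<partial>M n) \<le> K" if x: "x \<in> space (PiM ?I M)" for x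
  proof -
    obtain y0 where y0: "y0 \<in> space (M n)" using prob_space.not_empty[OF P[of n]] by blast
    let ?a = "f (x(n:=y0)) - c n" and ?b = "f (x(n:=y0)) + c n"
    interpret H: interval_bounded_random_variable "M n" "\<lambda>y. f (x(n:=y))" ?a ?b
    proof unfold_locales
      show "(\<lambda>y. f (x(n := y))) \<in> borel_measurable (M n)" using fcomp1[OF x] .
      show "AE y in M n. f (x(n := y)) \<in> {?a..?b}"
      proof (rule AE_I2)
        fix y assume y: "y \<in> space (M n)"
        have "\<bar>f (x(n:=y)) - f ((x(n:=y))(n:=y0))\<bar> \<le> c n"
          by (rule fc) (use y y0 in \<open>auto intro!: upd x\<close>)
        then show "f (x(n := y)) \<in> {?a..?b}" by auto
      qed
    qed
    have "ennreal (\<integral>y. exp (l * (f (x(n:=y)) - g x)) \<partial>M n) = (\<integral>\<^sup>+y. exp (l * (f (x(n:=y)) - g x)) \<partial>M n)"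
    proof (rule nn_integral_eq_integral[symmetric])
      show "integrable (M n) (\<lambda>y. exp (l * (f (x(n := y)) - g x)))"
      proof (rule bdd_integrable[OF P, where K="exp (l * (2*B))"])
        show "(\<lambda>y. exp (l * (f (x(n := y)) - g x))) \<in> borel_measurable (M n)"
          using fcomp1[OF x] by measurable
        fix y assume y: "y \<in> space (M n)"
        have "f (x(n := y)) - g x \<le> 2 * B" using fB[OF upd[OF x y]] gB[OF x] by auto
        then show "\<bar>exp (l * (f (x(n := y)) - g x))\<bar> \<le> exp (l * (2 * B))"
          using Suc.prems(4) by (simp add: mult_left_mono)
      qed
    qed auto
    also have "\<dots> \<le> ennreal (exp (l\<^sup>2 * (?b - ?a)\<^sup>2 / 8))"
      using H.Hoeffdings_lemma_nn_integral[OF Suc.prems(4)] by (simp add: g_def)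
    also have "l\<^sup>2 * (?b - ?a)\<^sup>2 / 8 = l^2 * (c n)^2 / 2" by (simp add: power2_eq_square algebra_simps)
    finally show ?thesis unfolding K_def by (simp add: ennreal_le_iff2 del: fun_upd_apply)
  qed
  define h where "h x = (\<integral>y. exp (l * (f (x(n:=y)) - g x)) \<partial>M n)" for x
  have hm: "h \<in> borel_measurable (PiM ?I M)"
  proof -
    have "(\<lambda>(x,y). exp (l * (f (x(n:=y)) - g x))) \<in> borel_measurable (PiM ?I M \<Otimes>\<^sub>M M n)"
      using fcomp gm by measurable
    then show ?thesis unfolding h_def using sigma_finite_measure.borel_measurable_lebesgue_integral[OF prob_space_imp_sigma_finite[OF P[of n]]] by simp
  qed
  have egm: "(\<lambda>x. exp (l * (g x - Eg))) \<in> borel_measurable (PiM ?I M)" using gm by measurable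
  have egB: "\<bar>exp (l * (g x - Eg))\<bar> \<le> exp (l * (2*B))" if x: "x \<in> space (PiM ?I M)" for x
  proof -
    have "\<bar>Eg\<bar> \<le> B" unfolding Eg_def by (rule bdd_integral_abs[OF probI gm gB])
    then have "g x - Eg \<le> 2 * B" using gB[OF x] by auto
    then show ?thesis using Suc.prems(4) by (simp add: mult_left_mono)
  qed
  have hB: "\<bar>h x\<bar> \<le> exp (l * (2*B))" if x: "x \<in> space (PiM ?I M)" for x
    unfolding h_def
  proof (rule bdd_integral_abs[OF P])
    show "(\<lambda>y. exp (l * (f (x(n := y)) - g x))) \<in> borel_measurable (M n)"
      using fcomp1[OF x] by measurable
    fix y assume y: "y \<in> space (M n)"
    have "f (x(n := y)) - g x \<le> 2 * B" using fB[OF upd[OF x y]] gB[OF x] by auto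
    then show "\<bar>exp (l * (f (x(n := y)) - g x))\<bar> \<le> exp (l * (2 * B))"
      using Suc.prems(4) by (simp add: mult_left_mono)
  qed
  have "(\<integral>x. exp (l * (f x - (\<integral>y. f y \<partial>PiM {..<Suc n} M))) \<partial>PiM {..<Suc n} M)
      = (\<integral>x. exp (l * (f x - Eg)) \<partial>PiM (insert n ?I) M)"
    using Ef by (simp add: ins Eg_def)
  also have "\<dots> = (\<integral>x. (\<integral>y. exp (l * (f (x(n:=y)) - Eg)) \<partial>M n) \<partial>PiM ?I M)"
  proof (rule PS.product_integral_insert[OF _ nI])
    show "integrable (Pi\<^sub>M (insert n {..<n}) M) (\<lambda>x. exp (l * (f x - Eg)))"
    proof (rule bdd_integrable[OF probS, where K="exp (l * (2*B))"])
      show "(\<lambda>x. exp (l * (f x - Eg))) \<in> borel_measurable (Pi\<^sub>M (insert n {..<n}) M)"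
        using fm by measurable
      fix x assume x: "x \<in> space (Pi\<^sub>M (insert n {..<n}) M)"
      have "\<bar>Eg\<bar> \<le> B" unfolding Eg_def by (rule bdd_integral_abs[OF probI gm gB])
      then have "f x - Eg \<le> 2 * B" using fB[OF x] by auto
      then show "\<bar>exp (l * (f x - Eg))\<bar> \<le> exp (l * (2 * B))"
        using Suc.prems(4) by (simp add: mult_left_mono)
    qed
  qed simp
  also have "\<dots> = (\<integral>x. exp (l * (g x - Eg)) * h x \<partial>PiM ?I M)"
  proof (rule Bochner_Integration.integral_cong[OF refl])
    fix x assume x: "x \<in> space (PiM ?I M)"
    have "(\<integral>y. exp (l * (f (x(n:=y)) - Eg)) \<partial>M n) = (\<integral>y. exp (l * (g x - Eg)) * exp (l * (f (x(n:=y)) - g x)) \<partial>M n)"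
      by (rule Bochner_Integration.integral_cong[OF refl]) (simp add: mult_exp_exp algebra_simps)
    also have "\<dots> = exp (l * (g x - Eg)) * h x" unfolding h_def by simp
    finally show "(\<integral>y. exp (l * (f (x(n:=y)) - Eg)) \<partial>M n) = exp (l * (g x - Eg)) * h x" .
  qed
  also have "\<dots> \<le> (\<integral>x. exp (l * (g x - Eg)) * K \<partial>PiM ?I M)"
  proof (rule integral_mono)
    show "integrable (Pi\<^sub>M {..<n} M) (\<lambda>x. exp (l * (g x - Eg)) * h x)"
    proof (rule bdd_integrable[OF probI, where K="exp (l * (2*B)) * exp (l * (2*B))"])
      show "(\<lambda>x. exp (l * (g x - Eg)) * h x) \<in> borel_measurable (Pi\<^sub>M {..<n} M)"
        using egm hm by measurable
      fix x assume x: "x \<in> space (Pi\<^sub>M {..<n} M)"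
      show "\<bar>exp (l * (g x - Eg)) * h x\<bar> \<le> exp (l * (2 * B)) * exp (l * (2 * B))"
        unfolding abs_mult by (rule mult_mono) (use egB[OF x] hB[OF x] in auto)
    qed
    show "integrable (Pi\<^sub>M {..<n} M) (\<lambda>x. exp (l * (g x - Eg)) * K)"
      by (rule integrable_mult_left, rule bdd_integrable[OF probI egm egB])
    fix x assume x: "x \<in> space (Pi\<^sub>M {..<n} M)"
    show "exp (l * (g x - Eg)) * h x \<le> exp (l * (g x - Eg)) * K"
      using inner[OF x] unfolding h_def by (intro mult_left_mono) auto
  qed
  also have "\<dots> = (\<integral>x. exp (l * (g x - Eg)) \<partial>PiM ?I M) * K" by simp
  also have "\<dots> \<le> exp (l^2 * (\<Sum>i<n. (c i)^2) / 2) * K"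
    using IH unfolding Eg_def K_def by (intro mult_right_mono) auto
  also have "\<dots> = exp (l^2 * (\<Sum>i<Suc n. (c i)^2) / 2)"
    unfolding K_def by (simp add: mult_exp_exp algebra_simps add_divide_distrib)
  finally show ?case .
qed

lemma mcdiarmid_upper:
  fixes M :: "nat \<Rightarrow> 'b measure" and f :: "(nat \<Rightarrow> 'b) \<Rightarrow> real"
  assumes P: "\<And>i. prob_space (M i)"
    and fm: "f \<in> borel_measurable (PiM {..<n} M)" and fB: "\<And>x. x \<in> space (PiM {..<n} M) \<Longrightarrow> \<bar>f x\<bar> \<le> B"
    and fc: "\<And>i x y. i < n \<Longrightarrow> x \<in> space (PiM {..<n} M) \<Longrightarrow> y \<in> space (M i) \<Longrightarrow> \<bar>f x - f (x(i:=y))\<bar> \<le> c i"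
    and S: "(\<Sum>i<n. (c i)^2) > 0" and t: "t > 0"
  shows "measure (PiM {..<n} M) {x \<in> space (PiM {..<n} M). f x - (\<integral>y. f y \<partial>PiM {..<n} M) \<ge> t}
          \<le> exp (- (t^2) / (2 * (\<Sum>i<n. (c i)^2)))"
proof -
  let ?N = "PiM {..<n} M" and ?S = "\<Sum>i<n. (c i)^2"
  interpret N: prob_space ?N by (simp add: P prob_space_PiM)
  define E where "E = (\<integral>y. f y \<partial>?N)"
  define l where "l = t / ?S"
  have l: "l > 0" using S t by (simp add: l_def)
  have "\<bar>E\<bar> \<le> B" unfolding E_def by (rule bdd_integral_abs[OF N.prob_space_axioms fm fB])
  have int: "integrable ?N (\<lambda>x. exp (l * (f x - E)))"
  proof (rule bdd_integrable[OF N.prob_space_axioms, where K="exp (l * (2*B))"])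
    show "(\<lambda>x. exp (l * (f x - E))) \<in> borel_measurable ?N" using fm by measurable
    fix x assume x: "x \<in> space ?N"
    have "f x - E \<le> 2 * B" using fB[OF x] \<open>\<bar>E\<bar> \<le> B\<close> by auto
    then show "\<bar>exp (l * (f x - E))\<bar> \<le> exp (l * (2 * B))" using l by (simp add: mult_left_mono)
  qed
  have "measure ?N {x \<in> space ?N. f x - E \<ge> t} \<le> exp (- l * t) * (\<integral>x\<in>space ?N. exp (l * (f x - E)) \<partial>?N)"
  proof (rule N.Chernoff_ineq_ge[OF l])
    show "set_integrable ?N (space ?N) (\<lambda>x. exp (l * (f x - E)))"
      unfolding set_integrable_def by (rule integrable_mult_indicator[OF sets.top int])
  qed simp
  also have "(\<integral>x\<in>space ?N. exp (l * (f x - E)) \<partial>?N) = (\<integral>x. exp (l * (f x - E)) \<partial>?N)"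
    by (rule set_integral_space[OF int])
  also have "\<dots> \<le> exp (l^2 * ?S / 2)"
    unfolding E_def by (rule mcdiarmid_mgf[OF P fm fB fc l])
  finally have "measure ?N {x \<in> space ?N. f x - E \<ge> t} \<le> exp (- l * t) * exp (l^2 * ?S / 2)"
    by (simp add: mult_left_mono)
  also have "exp (- l * t) * exp (l^2 * ?S / 2) = exp (- (t^2) / (2 * ?S))"
    unfolding mult_exp_exp using S by (simp add: l_def power2_eq_square field_simps)
  finally show ?thesis unfolding E_def .
qed

lemma mcdiarmid_abs:
  fixes M :: "nat \<Rightarrow> 'b measure" and f :: "(nat \<Rightarrow> 'b) \<Rightarrow> real"
  assumes P: "\<And>i. prob_space (M i)"
    and fm: "f \<in> borel_measurable (PiM {..<n} M)" and fB: "\<And>x. x \<in> space (PiM {..<n} M) \<Longrightarrow> \<bar>f x\<bar> \<le> B"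
    and fc: "\<And>i x y. i < n \<Longrightarrow> x \<in> space (PiM {..<n} M) \<Longrightarrow> y \<in> space (M i) \<Longrightarrow> \<bar>f x - f (x(i:=y))\<bar> \<le> c i"
    and S: "(\<Sum>i<n. (c i)^2) > 0" and t: "t > 0"
  shows "measure (PiM {..<n} M) {x \<in> space (PiM {..<n} M). \<bar>f x - (\<integral>y. f y \<partial>PiM {..<n} M)\<bar> \<ge> t}
          \<le> 2 * exp (- (t^2) / (2 * (\<Sum>i<n. (c i)^2)))"
proof -
  let ?N = "PiM {..<n} M" and ?S = "\<Sum>i<n. (c i)^2"
  interpret N: prob_space ?N by (simp add: P prob_space_PiM)
  have 1: "measure ?N {x \<in> space ?N. f x - (\<integral>y. f y \<partial>?N) \<ge> t} \<le> exp (- (t^2) / (2 * ?S))"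
    by (rule mcdiarmid_upper[OF P fm fB fc S t])
  have 2: "measure ?N {x \<in> space ?N. (- f x) - (\<integral>y. - f y \<partial>?N) \<ge> t} \<le> exp (- (t^2) / (2 * ?S))"
    by (rule mcdiarmid_upper[OF P _ _ _ S t]) (use fm fB fc in \<open>auto simp: abs_minus_commute\<close>)
  have "{x \<in> space ?N. \<bar>f x - (\<integral>y. f y \<partial>?N)\<bar> \<ge> t} =
        {x \<in> space ?N. f x - (\<integral>y. f y \<partial>?N) \<ge> t} \<union> {x \<in> space ?N. (- f x) - (\<integral>y. - f y \<partial>?N) \<ge> t}"
    by auto
  also have "measure ?N \<dots> \<le> measure ?N {x \<in> space ?N. f x - (\<integral>y. f y \<partial>?N) \<ge> t} + measure ?N {x \<in> space ?N. (- f x) - (\<integral>y. - f y \<partial>?N) \<ge> t}"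
    by (rule measure_Un_le) (use fm in \<open>simp_all\<close>)
  finally show ?thesis using 1 2 by linarith
qed




definition cA :: "nat \<Rightarrow> complex \<Rightarrow> real mat \<Rightarrow> complex mat" where
  "cA p z S = map_mat complex_of_real S - z \<cdot>\<^sub>m 1\<^sub>m p"

definition symm :: "nat \<Rightarrow> real mat \<Rightarrow> bool" where
  "symm p S \<longleftrightarrow> S \<in> carrier_mat p p \<and> (\<forall>j<p. \<forall>k<p. S $$ (j,k) = S $$ (k,j))"

lemma cA_carrier[simp]: "S \<in> carrier_mat p p \<Longrightarrow> cA p z S \<in> carrier_mat p p"
  unfolding cA_def by auto

lemma cA_index: "S \<in> carrier_mat p p \<Longrightarrow> j < p \<Longrightarrow> k < p \<Longrightarrow>
   cA p z S $$ (j,k) = complex_of_real (S $$ (j,k)) - (if j = k then z else 0)"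
  unfolding cA_def by auto

lemma Im_cnj_eq_zero: "Im (cnj (w::complex)) = Im w \<Longrightarrow> Im w = 0" by simp

lemma Im_eq_cnj: "(a::complex) = cnj w \<Longrightarrow> Im a = - Im w" by simp

lemma quad_real:
  assumes "symm p S"
  shows "Im (\<Sum>k<p. \<Sum>l<p. complex_of_real (S $$ (k,l)) * (cnj (y k) * y l)) = 0"
proof -
  let ?w = "\<Sum>k<p. \<Sum>l<p. complex_of_real (S $$ (k,l)) * (cnj (y k) * y l)"
  have "cnj ?w = (\<Sum>k<p. \<Sum>l<p. complex_of_real (S $$ (k,l)) * (cnj (y l) * y k))"
    by (simp add: mult_ac)
  also have "\<dots> = (\<Sum>l<p. \<Sum>k<p. complex_of_real (S $$ (k,l)) * (cnj (y l) * y k))"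
    by (rule sum.swap)
  also have "\<dots> = ?w"
    using assms unfolding symm_def by (auto intro!: sum.cong)
  finally have "Im (cnj ?w) = Im ?w" by simp
  then show ?thesis by (rule Im_cnj_eq_zero)
qed

lemma key_quad:
  assumes S: "symm p S" and y: "y \<in> carrier_vec p"
  shows "Im (\<Sum>k<p. cnj (y$k) * (cA p z S *\<^sub>v y)$k) = - Im z * (\<Sum>k<p. (cmod (y$k))^2)"
proof -
  have Sc: "S \<in> carrier_mat p p" using S by (simp add: symm_def)
  have e: "(cA p z S *\<^sub>v y)$k = (\<Sum>l<p. complex_of_real (S $$ (k,l)) * y$l) - z * y$k" if k: "k < p" for k
  proof -
    have "(cA p z S *\<^sub>v y)$k = (\<Sum>l<p. (complex_of_real (S $$ (k,l)) - (if k = l then z else 0)) * y$l)"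
    proof -
      have dims: "dim_row (cA p z S) = p" "dim_col (cA p z S) = p" using cA_carrier[OF Sc] by auto
      show ?thesis using k Sc y dims by (auto simp: scalar_prod_def cA_index lessThan_atLeast0 intro!: sum.cong)
    qed
    also have "\<dots> = (\<Sum>l<p. complex_of_real (S $$ (k,l)) * y$l) - (\<Sum>l<p. (if k = l then z else 0) * y$l)"
      by (simp add: algebra_simps sum_subtractf)
    also have "(\<Sum>l<p. (if k = l then z else 0) * y$l) = z * y$k"
    proof -
      have "(\<Sum>l<p. (if k = l then z else 0) * y$l) = (\<Sum>l<p. if k = l then z * y$l else 0)"
        by (rule sum.cong) auto
      then show ?thesis using k by simp
    qed
    finally show ?thesis .
  qed
  have "(\<Sum>k<p. cnj (y$k) * (cA p z S *\<^sub>v y)$k) =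
        (\<Sum>k<p. \<Sum>l<p. complex_of_real (S $$ (k,l)) * (cnj (y$k) * y$l)) - z * (\<Sum>k<p. cnj (y$k) * y$k)"
    by (simp add: e algebra_simps sum_subtractf sum_distrib_left sum_distrib_right)
  also have "(\<Sum>k<p. cnj (y$k) * y$k) = (\<Sum>k<p. complex_of_real ((cmod (y$k))^2))"
    by (rule sum.cong[OF refl], subst complex_norm_square, rule mult.commute)
  also have "\<dots> = complex_of_real (\<Sum>k<p. (cmod (y$k))^2)" by (rule of_real_sum[symmetric])
  finally show ?thesis
    using quad_real[OF S, of "\<lambda>k. y$k"] by simp
qed

lemma mat_inv_unique:
  assumes A: "A \<in> carrier_mat n n" and B: "B \<in> carrier_mat n n" and AB: "A * B = 1\<^sub>m n" and BA: "B * A = 1\<^sub>m n"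
  shows "mat_inv A = B"
  unfolding mat_inv_def
proof (rule the_equality)
  show "B \<in> carrier_mat (dim_row A) (dim_row A) \<and> A * B = 1\<^sub>m (dim_row A) \<and> B * A = 1\<^sub>m (dim_row A)"
    using assms by auto
  fix C assume C: "C \<in> carrier_mat (dim_row A) (dim_row A) \<and> A * C = 1\<^sub>m (dim_row A) \<and> C * A = 1\<^sub>m (dim_row A)"
  then have Cc: "C \<in> carrier_mat n n" and CA: "C * A = 1\<^sub>m n" using A by auto
  have "C = C * (A * B)" using Cc AB by simp
  also have "\<dots> = (C * A) * B" using Cc A B by simp
  also have "\<dots> = B" using CA B by simp
  finally show "C = B" .
qed

lemma mat_inv_adj:
  fixes A :: "'a :: field mat"
  assumes A: "A \<in> carrier_mat n n" and d: "det A \<noteq> 0"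
  shows "mat_inv A = (1 / det A) \<cdot>\<^sub>m adj_mat A" and "mat_inv A \<in> carrier_mat n n"
    and "A * mat_inv A = 1\<^sub>m n" and "mat_inv A * A = 1\<^sub>m n"
proof -
  let ?B = "(1 / det A) \<cdot>\<^sub>m adj_mat A"
  have adj: "adj_mat A \<in> carrier_mat n n" "A * adj_mat A = det A \<cdot>\<^sub>m 1\<^sub>m n" "adj_mat A * A = det A \<cdot>\<^sub>m 1\<^sub>m n"
    using adj_mat[OF A] by auto
  have Bc: "?B \<in> carrier_mat n n" using adj by simp
  have AB: "A * ?B = 1\<^sub>m n"
    using mult_smult_distrib[OF A adj(1)] adj(2) d by (auto intro!: eq_matI)
  have BA: "?B * A = 1\<^sub>m n"
    using mult_smult_assoc_mat[OF adj(1) A] adj(3) d by (auto intro!: eq_matI)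
  show "mat_inv A = ?B" by (rule mat_inv_unique[OF A Bc AB BA])
  then show "mat_inv A \<in> carrier_mat n n" "A * mat_inv A = 1\<^sub>m n" "mat_inv A * A = 1\<^sub>m n"
    using Bc AB BA by auto
qed

lemma cA_det:
  assumes S: "symm p S" and z: "Im z > 0"
  shows "det (cA p z S) \<noteq> 0"
proof
  have Sc: "S \<in> carrier_mat p p" using S by (simp add: symm_def)
  assume "det (cA p z S) = 0"
  then obtain v where v: "v \<in> carrier_vec p" "v \<noteq> 0\<^sub>v p" "cA p z S *\<^sub>v v = 0\<^sub>v p"
    using det_0_iff_vec_prod_zero[OF cA_carrier[OF Sc]] by blast
  have "Im (\<Sum>k<p. cnj (v$k) * (cA p z S *\<^sub>v v)$k) = 0" using v(3) by simp
  then have "Im z * (\<Sum>k<p. (cmod (v$k))^2) = 0" using key_quad[OF S v(1), of z] by simp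
  then have "(\<Sum>k<p. (cmod (v$k))^2) = 0" using z by simp
  then have "\<forall>k\<in>{..<p}. (cmod (v$k))^2 = 0" by (subst (asm) sum_nonneg_eq_0_iff) (auto simp del: norm_eq_zero)
  then have "v = 0\<^sub>v p" using v(1) by (auto intro!: eq_vecI)
  with v(2) show False by simp
qed

lemma cA_inv:
  assumes S: "symm p S" and z: "Im z > 0"
  shows "mat_inv (cA p z S) \<in> carrier_mat p p" "cA p z S * mat_inv (cA p z S) = 1\<^sub>m p"
    "mat_inv (cA p z S) * cA p z S = 1\<^sub>m p"
proof -
  have Sc: "S \<in> carrier_mat p p" using S by (simp add: symm_def)
  show "mat_inv (cA p z S) \<in> carrier_mat p p" "cA p z S * mat_inv (cA p z S) = 1\<^sub>m p"
    "mat_inv (cA p z S) * cA p z S = 1\<^sub>m p"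
    using mat_inv_adj(2-4)[OF cA_carrier[OF Sc] cA_det[OF S z]] by auto
qed

lemma cA_inv_symm:
  assumes S: "symm p S" and z: "Im z > 0" and j: "j < p" and k: "k < p"
  shows "mat_inv (cA p z S) $$ (j,k) = mat_inv (cA p z S) $$ (k,j)"
proof -
  have Sc: "S \<in> carrier_mat p p" using S by (simp add: symm_def)
  let ?A = "cA p z S" let ?B = "mat_inv ?A"
  note inv = cA_inv[OF S z]
  have Ac: "?A \<in> carrier_mat p p" using Sc by simp
  have Ssym: "S $$ (a,b) = S $$ (b,a)" if "a < p" "b < p" for a b
    using S that unfolding symm_def by blast
  have At: "transpose_mat ?A = ?A"
  proof (rule eq_matI)
    fix a b assume a: "a < dim_row ?A" and b: "b < dim_col ?A"
    then have a': "a < p" and b': "b < p" using Ac by auto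
    show "transpose_mat ?A $$ (a, b) = ?A $$ (a, b)"
      using a' b' Ac Ssym[OF b' a'] by (simp add: cA_index[OF Sc])
  qed (use Ac in auto)
  have Btc: "transpose_mat ?B \<in> carrier_mat p p" using inv(1) by auto
  have 1: "?A * transpose_mat ?B = 1\<^sub>m p"
  proof -
    have "?A * transpose_mat ?B = transpose_mat ?A * transpose_mat ?B" using At by simp
    also have "\<dots> = transpose_mat (?B * ?A)" using transpose_mult[OF inv(1) Ac] by simp
    also have "\<dots> = 1\<^sub>m p" using inv(3) by simp
    finally show ?thesis .
  qed
  have 2: "transpose_mat ?B * ?A = 1\<^sub>m p"
  proof -
    have "transpose_mat ?B * ?A = transpose_mat ?B * transpose_mat ?A" using At by simp
    also have "\<dots> = transpose_mat (?A * ?B)" using transpose_mult[OF Ac inv(1)] by simp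
    also have "\<dots> = 1\<^sub>m p" using inv(2) by simp
    finally show ?thesis .
  qed
  have "?B = transpose_mat ?B" using mat_inv_unique[OF Ac Btc 1 2] .
  then have "?B $$ (j,k) = transpose_mat ?B $$ (j,k)" by (rule arg_cong)
  also have "\<dots> = ?B $$ (k,j)" using j k inv(1) by simp
  finally show ?thesis .
qed

lemma Im_quad:
  assumes S: "symm p S" and z: "Im z > 0"
    and uc: "uc = vec p (\<lambda>j. complex_of_real (u j))"
    and y: "y = mat_inv (cA p z S) *\<^sub>v uc"
  shows "Im (uc \<bullet> y) = Im z * (\<Sum>k<p. (cmod (y$k))^2)"
proof -
  have Sc: "S \<in> carrier_mat p p" using S by (simp add: symm_def)
  note inv = cA_inv[OF S z]
  have ucc: "uc \<in> carrier_vec p" using uc by simp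
  have yc: "y \<in> carrier_vec p" using y inv(1) ucc by simp
  have Ay: "cA p z S *\<^sub>v y = uc"
  proof -
    have "cA p z S *\<^sub>v y = (cA p z S * mat_inv (cA p z S)) *\<^sub>v uc"
      unfolding y by (rule assoc_mult_mat_vec[OF cA_carrier[OF Sc] inv(1) ucc, symmetric])
    also have "\<dots> = uc" using inv(2) ucc by simp
    finally show ?thesis .
  qed
  have "uc \<bullet> y = (\<Sum>k<p. uc$k * y$k)" using yc by (simp add: scalar_prod_def lessThan_atLeast0)
  also have "\<dots> = (\<Sum>k<p. cnj ((cA p z S *\<^sub>v y)$k) * y$k)"
    by (rule sum.cong[OF refl]) (simp add: Ay uc)
  also have "\<dots> = cnj (\<Sum>k<p. cnj (y$k) * (cA p z S *\<^sub>v y)$k)"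
    by (simp add: mult.commute)
  finally have "Im (uc \<bullet> y) = - Im (\<Sum>k<p. cnj (y$k) * (cA p z S *\<^sub>v y)$k)" by (rule Im_eq_cnj)
  also have "\<dots> = Im z * (\<Sum>k<p. (cmod (y$k))^2)" using key_quad[OF S yc, of z] by simp
  finally show ?thesis .
qed

lemma rank_one:
  assumes S: "symm p S" and z: "Im z > 0"
  shows "cmod (mat_trace (mat_inv (cA p z (mat p p (\<lambda>(j,k). S $$ (j,k) + u j * u k))))
               - mat_trace (mat_inv (cA p z S))) \<le> 1 / Im z"
proof -
  define S' where "S' = mat p p (\<lambda>(j,k). S $$ (j,k) + u j * u k)"
  have Sc: "S \<in> carrier_mat p p" using S by (simp add: symm_def)
  have S': "symm p S'" using S unfolding symm_def S'_def by (auto simp: mult.commute)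
  have S'c: "S' \<in> carrier_mat p p" unfolding S'_def by simp
  define A where "A = cA p z S"
  define A' where "A' = cA p z S'"
  define B where "B = mat_inv A"
  define B' where "B' = mat_inv A'"
  define uc where "uc = vec p (\<lambda>j. complex_of_real (u j))"
  define U where "U = mat p p (\<lambda>(j,k). complex_of_real (u j * u k))"
  define y where "y = B *\<^sub>v uc"
  define y' where "y' = B' *\<^sub>v uc"
  define s where "s = uc \<bullet> y"
  note inv = cA_inv[OF S z, folded A_def, folded B_def]
  note inv' = cA_inv[OF S' z, folded A'_def, folded B'_def]
  have Bsym': "B' $$ (a,b) = B' $$ (b,a)" if "a < p" "b < p" for a b
    unfolding B'_def A'_def by (rule cA_inv_symm[OF S' z that])
  have Ac: "A \<in> carrier_mat p p" unfolding A_def using Sc by simp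
  have A'c: "A' \<in> carrier_mat p p" unfolding A'_def using S'c by simp
  have Uc: "U \<in> carrier_mat p p" unfolding U_def by simp
  have ucc: "uc \<in> carrier_vec p" unfolding uc_def by simp
  have yc: "y \<in> carrier_vec p" unfolding y_def using inv(1) ucc by simp
  have y'c: "y' \<in> carrier_vec p" unfolding y'_def using inv'(1) ucc by simp
  have AU: "A' = A + U"
  proof (rule eq_matI)
    fix a b assume "a < dim_row (A + U)" "b < dim_col (A + U)"
    then have a: "a < p" and b: "b < p" using Ac Uc by auto
    have "A' $$ (a,b) = complex_of_real (S' $$ (a,b)) - (if a = b then z else 0)"
      unfolding A'_def by (rule cA_index[OF S'c a b])
    moreover have "A $$ (a,b) = complex_of_real (S $$ (a,b)) - (if a = b then z else 0)"
      unfolding A_def by (rule cA_index[OF Sc a b])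
    ultimately show "A' $$ (a,b) = (A + U) $$ (a,b)"
      using a b Ac Uc by (simp add: S'_def U_def)
  qed (use Ac A'c Uc in auto)
  have UA: "A' - A = U"
    by (rule eq_matI) (use Ac Uc AU in auto)
  have diff: "B - B' = B * (U * B')"
  proof -
    have "B * (U * B') = B * ((A' - A) * B')" using UA by simp
    also have "\<dots> = B * (A' * B' - A * B')" by (simp only: minus_mult_distrib_mat[OF A'c Ac inv'(1)])
    also have "\<dots> = B * (1\<^sub>m p - A * B')" by (simp only: inv'(2))
    also have "\<dots> = B * 1\<^sub>m p - B * (A * B')"
      by (rule mult_minus_distrib_mat[OF inv(1) one_carrier_mat mult_carrier_mat[OF Ac inv'(1)]])
    also have "B * (A * B') = (B * A) * B'" using inv(1) Ac inv'(1) by simp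
    also have "\<dots> = B'" using inv(3) inv'(1) by simp
    also have "B * 1\<^sub>m p = B" using inv(1) by simp
    finally show ?thesis by simp
  qed
  have yi: "y$i = (\<Sum>k<p. B $$ (i,k) * uc$k)" if "i < p" for i
    using that inv(1) ucc by (simp add: y_def scalar_prod_def lessThan_atLeast0)
  have y'i: "y'$i = (\<Sum>k<p. B' $$ (i,k) * uc$k)" if "i < p" for i
    using that inv'(1) ucc by (simp add: y'_def scalar_prod_def lessThan_atLeast0)
  have tr: "mat_trace B - mat_trace B' = (\<Sum>i<p. y$i * y'$i)"
  proof -
    have "mat_trace B - mat_trace B' = (\<Sum>i<p. (B - B') $$ (i,i))"
      using inv(1) inv'(1) by (simp add: mat_trace_def sum_subtractf)
    also have "\<dots> = (\<Sum>i<p. (B * (U * B')) $$ (i,i))" using diff by simp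
    also have "\<dots> = (\<Sum>i<p. y$i * y'$i)"
    proof (rule sum.cong[OF refl])
      fix i assume i: "i \<in> {..<p}"
      have UB: "(U * B') $$ (k,i) = uc$k * y'$i" if k: "k < p" for k
      proof -
        have "(U * B') $$ (k,i) = (\<Sum>l<p. complex_of_real (u k * u l) * B' $$ (l,i))"
          using k i inv'(1) by (simp add: U_def scalar_prod_def lessThan_atLeast0)
        also have "\<dots> = (\<Sum>l<p. uc$k * (B' $$ (i,l) * uc$l))"
          by (rule sum.cong[OF refl]) (use k i in \<open>simp add: uc_def Bsym'\<close>)
        also have "\<dots> = uc$k * y'$i" using i by (simp add: y'i sum_distrib_left)
        finally show ?thesis .
      qed
      have "(B * (U * B')) $$ (i,i) = (\<Sum>k<p. B $$ (i,k) * (U * B') $$ (k,i))"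
        using i inv(1) Uc inv'(1) by (simp add: scalar_prod_def lessThan_atLeast0)
      also have "\<dots> = (\<Sum>k<p. B $$ (i,k) * uc$k * y'$i)"
        by (rule sum.cong[OF refl]) (simp add: UB)
      also have "\<dots> = y$i * y'$i" using i by (simp add: yi sum_distrib_right)
      finally show "(B * (U * B')) $$ (i,i) = y$i * y'$i" .
    qed
    finally show ?thesis .
  qed
  have Ay: "A *\<^sub>v y = uc"
  proof -
    have "A *\<^sub>v y = (A * B) *\<^sub>v uc"
      unfolding y_def by (rule assoc_mult_mat_vec[OF Ac inv(1) ucc, symmetric])
    also have "\<dots> = uc" using inv(2) ucc by simp
    finally show ?thesis .
  qed
  have Uy: "U *\<^sub>v y = s \<cdot>\<^sub>v uc"
  proof (rule eq_vecI)
    fix k assume "k < dim_vec (s \<cdot>\<^sub>v uc)"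
    then have k: "k < p" using ucc by simp
    have "(U *\<^sub>v y) $ k = (\<Sum>l<p. complex_of_real (u k * u l) * y$l)"
      using k yc by (simp add: U_def scalar_prod_def lessThan_atLeast0)
    also have "\<dots> = uc$k * (\<Sum>l<p. uc$l * y$l)"
      using k by (simp add: uc_def sum_distrib_left mult_ac)
    also have "(\<Sum>l<p. uc$l * y$l) = s"
      using yc by (simp add: s_def scalar_prod_def lessThan_atLeast0)
    finally show "(U *\<^sub>v y) $ k = (s \<cdot>\<^sub>v uc) $ k" using k ucc by (simp add: mult.commute)
  qed (use ucc Uc in simp)
  have A'y: "A' *\<^sub>v y = (1 + s) \<cdot>\<^sub>v uc"
  proof -
    have "A' *\<^sub>v y = A *\<^sub>v y + U *\<^sub>v y"
      unfolding AU by (rule add_mult_distrib_mat_vec[OF Ac Uc yc])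
    also have "\<dots> = uc + s \<cdot>\<^sub>v uc" by (simp add: Ay Uy)
    also have "\<dots> = (1 + s) \<cdot>\<^sub>v uc" using ucc by (intro eq_vecI) (auto simp: algebra_simps)
    finally show ?thesis .
  qed
  have yy': "y = (1 + s) \<cdot>\<^sub>v y'"
  proof -
    have "y = (B' * A') *\<^sub>v y" using inv'(3) yc by simp
    also have "\<dots> = B' *\<^sub>v (A' *\<^sub>v y)" by (rule assoc_mult_mat_vec[OF inv'(1) A'c yc])
    also have "\<dots> = B' *\<^sub>v ((1 + s) \<cdot>\<^sub>v uc)" by (simp add: A'y)
    also have "\<dots> = (1 + s) \<cdot>\<^sub>v y'" unfolding y'_def by (rule mult_mat_vec[OF inv'(1) ucc])
    finally show ?thesis .
  qed
  have yk: "y$k = (1 + s) * y'$k" if "k < p" for k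
    using that y'c by (subst yy') simp
  define N where "N = (\<Sum>k<p. (cmod (y$k))^2)"
  have ImS: "Im s = Im z * N"
    unfolding s_def N_def by (rule Im_quad[OF S z uc_def]) (simp add: y_def B_def A_def)
  have N0: "N \<ge> 0" unfolding N_def by (simp add: sum_nonneg)
  have "cmod (\<Sum>i<p. y$i * y'$i) \<le> 1 / Im z"
  proof (cases "N = 0")
    case True
    then have "\<forall>k\<in>{..<p}. (cmod (y$k))^2 = 0" unfolding N_def
      by (subst (asm) sum_nonneg_eq_0_iff) (auto simp del: norm_eq_zero)
    then have "(\<Sum>i<p. y$i * y'$i) = 0" by simp
    then show ?thesis using z by simp
  next
    case False
    then have Np: "N > 0" using N0 by simp
    have Im1: "Im (1 + s) = Im z * N" using ImS by simp
    have s1: "1 + s \<noteq> 0"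
    proof
      assume "1 + s = 0"
      then have "Im (1 + s) = 0" by simp
      with Im1 Np z show False by simp
    qed
    have "(\<Sum>i<p. y$i * y'$i) = (\<Sum>i<p. y$i * y$i / (1 + s))"
      by (rule sum.cong[OF refl]) (use s1 in \<open>simp add: yk field_simps\<close>)
    also have "\<dots> = (\<Sum>i<p. y$i * y$i) / (1 + s)" by (simp add: sum_divide_distrib)
    also have "cmod \<dots> = cmod (\<Sum>i<p. y$i * y$i) / cmod (1 + s)" by (simp add: norm_divide)
    also have "\<dots> \<le> N / (Im z * N)"
    proof (rule frac_le)
      show "0 \<le> N" by (rule N0)
      have "cmod (\<Sum>i<p. y$i * y$i) \<le> (\<Sum>i<p. cmod (y$i * y$i))" by (rule norm_sum)
      also have "\<dots> = N" unfolding N_def by (simp add: norm_mult power2_eq_square)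
      finally show "cmod (\<Sum>i<p. y$i * y$i) \<le> N" .
      show "0 < Im z * N" using z Np by simp
      show "Im z * N \<le> cmod (1 + s)" using abs_Im_le_cmod[of "1 + s"] Im1 by simp
    qed
    also have "\<dots> = 1 / Im z" using Np by simp
    finally show ?thesis .
  qed
  then have "cmod (mat_trace B - mat_trace B') \<le> 1 / Im z" using tr by simp
  then show ?thesis
    by (simp add: B_def B'_def A_def A'_def S'_def norm_minus_commute)
qed

lemma trace_bound:
  assumes S: "symm p S" and z: "Im z > 0"
  shows "cmod (mat_trace (mat_inv (cA p z S))) \<le> real p / Im z"
proof -
  define B where "B = mat_inv (cA p z S)"
  note inv = cA_inv[OF S z, folded B_def]
  have diag: "cmod (B $$ (i,i)) \<le> 1 / Im z" if i: "i < p" for i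
  proof -
    define uc where "uc = vec p (\<lambda>j. complex_of_real (if j = i then 1 else 0))"
    define y where "y = B *\<^sub>v uc"
    have ucc: "uc \<in> carrier_vec p" unfolding uc_def by simp
    have yc: "y \<in> carrier_vec p" unfolding y_def using inv(1) ucc by simp
    have yk: "y$k = B $$ (k,i)" if k: "k < p" for k
    proof -
      have "y$k = (\<Sum>l<p. B $$ (k,l) * uc$l)"
        using k inv(1) ucc by (simp add: y_def scalar_prod_def lessThan_atLeast0)
      also have "\<dots> = (\<Sum>l<p. if l = i then B $$ (k,l) else 0)"
        by (rule sum.cong[OF refl]) (simp add: uc_def)
      also have "\<dots> = B $$ (k,i)" using i by simp
      finally show ?thesis .
    qed
    have s: "uc \<bullet> y = B $$ (i,i)"
    proof -
      have "uc \<bullet> y = (\<Sum>l<p. uc$l * y$l)" using yc by (simp add: scalar_prod_def lessThan_atLeast0)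
      also have "\<dots> = (\<Sum>l<p. if l = i then y$l else 0)"
        by (rule sum.cong[OF refl]) (simp add: uc_def)
      also have "\<dots> = B $$ (i,i)" using i yk by simp
      finally show ?thesis .
    qed
    define N where "N = (\<Sum>k<p. (cmod (y$k))^2)"
    have ImS: "Im (B $$ (i,i)) = Im z * N"
      unfolding s[symmetric] N_def
      by (rule Im_quad[OF S z uc_def[unfolded of_real_1 of_real_0]]) (simp add: y_def B_def)
    have "(cmod (y$i))^2 \<le> N" unfolding N_def
      by (rule member_le_sum) (use i in auto)
    then have le: "(cmod (B $$ (i,i)))^2 \<le> N" using yk[OF i] by simp
    have "Im z * (cmod (B $$ (i,i)))^2 \<le> Im z * N" using le z by simp
    also have "\<dots> \<le> cmod (B $$ (i,i))" using ImS abs_Im_le_cmod[of "B $$ (i,i)"] by simp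
    finally have *: "Im z * (cmod (B $$ (i,i)))^2 \<le> cmod (B $$ (i,i))" .
    show ?thesis
    proof (cases "cmod (B $$ (i,i)) = 0")
      case True then show ?thesis using z by simp
    next
      case False
      then have pos: "cmod (B $$ (i,i)) > 0" by simp
      from * have "Im z * cmod (B $$ (i,i)) \<le> 1"
        using pos by (simp add: power2_eq_square)
      then show ?thesis using z by (simp add: field_simps)
    qed
  qed
  have "cmod (mat_trace B) = cmod (\<Sum>i<p. B $$ (i,i))" using inv(1) by (simp add: mat_trace_def)
  also have "\<dots> \<le> (\<Sum>i<p. cmod (B $$ (i,i)))" by (rule norm_sum)
  also have "\<dots> \<le> (\<Sum>i<p. 1 / Im z)" by (rule sum_mono) (simp add: diag)
  also have "\<dots> = real p / Im z" by simp
  finally show ?thesis unfolding B_def .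
qed

lemma stieltjes_cA: "stieltjes_tr p M z = mat_trace (mat_inv (cA p z M)) / of_nat p"
  by (simp add: stieltjes_tr_def cA_def)

lemma sample_symm: "symm p (sample_mat p N R)"
  unfolding symm_def sample_mat_def by (auto simp: mult.commute)

lemma sample_split:
  assumes i: "i < N"
  shows "sample_mat p N R = mat p p (\<lambda>(j,k). mat p p (\<lambda>(j,k). \<Sum>i'\<in>{..<N}-{i}. R i' j * R i' k) $$ (j,k) + R i j * R i k)"
proof (rule eq_matI)
  fix j k assume "j < dim_row (mat p p (\<lambda>(j,k). mat p p (\<lambda>(j,k). \<Sum>i'\<in>{..<N}-{i}. R i' j * R i' k) $$ (j,k) + R i j * R i k))"
    "k < dim_col (mat p p (\<lambda>(j,k). mat p p (\<lambda>(j,k). \<Sum>i'\<in>{..<N}-{i}. R i' j * R i' k) $$ (j,k) + R i j * R i k))"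
  then have j: "j < p" and k: "k < p" by auto
  have "(\<Sum>i'<N. R i' j * R i' k) = R i j * R i k + (\<Sum>i'\<in>{..<N}-{i}. R i' j * R i' k)"
    using i by (subst sum.remove[of _ i]) auto
  then show "sample_mat p N R $$ (j, k) = mat p p (\<lambda>(j,k). mat p p (\<lambda>(j,k). \<Sum>i'\<in>{..<N}-{i}. R i' j * R i' k) $$ (j,k) + R i j * R i k) $$ (j, k)"
    using j k by (simp add: sample_mat_def)
qed (auto simp: sample_mat_def)

lemma stieltjes_bound:
  assumes p: "p > 0" and z: "Im z > 0"
  shows "cmod (stieltjes_tr p (sample_mat p N R) z) \<le> 1 / Im z"
proof -
  have "cmod (stieltjes_tr p (sample_mat p N R) z) = cmod (mat_trace (mat_inv (cA p z (sample_mat p N R)))) / real p"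
    by (simp add: stieltjes_cA norm_divide)
  also have "\<dots> \<le> (real p / Im z) / real p"
    by (rule divide_right_mono[OF trace_bound[OF sample_symm z]]) simp
  also have "\<dots> = 1 / Im z" using p by simp
  finally show ?thesis .
qed

lemma stieltjes_bd:
  assumes p: "p > 0" and z: "Im z > 0" and i: "i < N"
  shows "cmod (stieltjes_tr p (sample_mat p N R) z - stieltjes_tr p (sample_mat p N (R(i:=w))) z) \<le> 2 / (real p * Im z)"
proof -
  define S0 where "S0 = mat p p (\<lambda>(j,k). \<Sum>i'\<in>{..<N}-{i}. R i' j * R i' k)"
  have S0': "S0 = mat p p (\<lambda>(j,k). \<Sum>i'\<in>{..<N}-{i}. (R(i:=w)) i' j * (R(i:=w)) i' k)"
    unfolding S0_def by (rule arg_cong[where f="mat p p"]) (auto intro!: sum.cong simp: fun_eq_iff)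
  have S0s: "symm p S0" unfolding symm_def S0_def by (auto simp: mult.commute)
  define T where "T S = mat_trace (mat_inv (cA p z S))" for S
  have e1: "sample_mat p N R = mat p p (\<lambda>(j,k). S0 $$ (j,k) + R i j * R i k)"
    unfolding S0_def by (rule sample_split[OF i])
  have e2: "sample_mat p N (R(i:=w)) = mat p p (\<lambda>(j,k). S0 $$ (j,k) + w j * w k)"
    using sample_split[OF i, of p "R(i:=w)"] unfolding S0'[symmetric] by simp
  have "cmod (T (sample_mat p N R) - T (sample_mat p N (R(i:=w))))
      = cmod ((T (mat p p (\<lambda>(j,k). S0 $$ (j,k) + R i j * R i k)) - T S0) - (T (mat p p (\<lambda>(j,k). S0 $$ (j,k) + w j * w k)) - T S0))"
    unfolding e1 e2 by simp
  also have "\<dots> \<le> cmod (T (mat p p (\<lambda>(j,k). S0 $$ (j,k) + R i j * R i k)) - T S0) + cmod (T (mat p p (\<lambda>(j,k). S0 $$ (j,k) + w j * w k)) - T S0)"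
    by (rule norm_triangle_ineq4)
  also have "\<dots> \<le> 1 / Im z + 1 / Im z"
    unfolding T_def by (intro add_mono rank_one[OF S0s z])
  finally have *: "cmod (T (sample_mat p N R) - T (sample_mat p N (R(i:=w)))) \<le> 2 / Im z" by simp
  have "cmod (stieltjes_tr p (sample_mat p N R) z - stieltjes_tr p (sample_mat p N (R(i:=w))) z)
      = cmod (T (sample_mat p N R) - T (sample_mat p N (R(i:=w)))) / real p"
    by (simp add: stieltjes_cA T_def norm_divide diff_divide_distrib[symmetric])
  also have "\<dots> \<le> (2 / Im z) / real p" by (rule divide_right_mono[OF *]) simp
  also have "\<dots> = 2 / (real p * Im z)" by simp
  finally show ?thesis .
qed




lemma meas_det:
  fixes A :: "'a \<Rightarrow> complex mat"
  assumes car: "\<And>x. A x \<in> carrier_mat d d"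
    and ent: "\<And>j k. j < d \<Longrightarrow> k < d \<Longrightarrow> (\<lambda>x. A x $$ (j,k)) \<in> borel_measurable M"
  shows "(\<lambda>x. det (A x)) \<in> borel_measurable M"
proof -
  have "(\<lambda>x. det (A x)) = (\<lambda>x. \<Sum>\<pi>\<in>{\<pi>. \<pi> permutes {0..<d}}. signof \<pi> * (\<Prod>i = 0..<d. A x $$ (i, \<pi> i)))"
    by (rule ext) (rule det_def'[OF car])
  also have "\<dots> \<in> borel_measurable M"
  proof (rule borel_measurable_sum)
    fix \<pi> assume \<pi>: "\<pi> \<in> {\<pi>. \<pi> permutes {0..<d}}"
    have "(\<lambda>x. \<Prod>i = 0..<d. A x $$ (i, \<pi> i)) \<in> borel_measurable M"
    proof (rule borel_measurable_prod)
      fix i assume i: "i \<in> {0..<d}"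
      have "\<pi> permutes {0..<d}" using \<pi> by simp
      then have "\<pi> i \<in> {0..<d}" using i by (simp add: permutes_in_image)
      then show "(\<lambda>x. A x $$ (i, \<pi> i)) \<in> borel_measurable M" using ent i by auto
    qed
    then show "(\<lambda>x. signof \<pi> * (\<Prod>i = 0..<d. A x $$ (i, \<pi> i))) \<in> borel_measurable M"
      by (rule borel_measurable_times[OF borel_measurable_const])
  qed
  finally show ?thesis .
qed

lemma meas_trace_inv:
  fixes A :: "'a \<Rightarrow> complex mat"
  assumes car: "\<And>x. A x \<in> carrier_mat d d"
    and ent: "\<And>j k. j < d \<Longrightarrow> k < d \<Longrightarrow> (\<lambda>x. A x $$ (j,k)) \<in> borel_measurable M"
    and nz: "\<And>x. det (A x) \<noteq> 0"
  shows "(\<lambda>x. mat_trace (mat_inv (A x))) \<in> borel_measurable M"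
proof -
  have eq: "mat_trace (mat_inv (A x)) = (\<Sum>i<d. (1 / det (A x)) * det (mat_delete (A x) i i))" for x
  proof -
    have "mat_inv (A x) = (1 / det (A x)) \<cdot>\<^sub>m adj_mat (A x)" by (rule mat_inv_adj(1)[OF car nz])
    moreover have "(-1::complex)^(i+i) = 1" for i by (simp add: neg_one_even_power)
    ultimately show ?thesis using car[of x] by (simp add: mat_trace_def adj_mat_def cofactor_def)
  qed
  show ?thesis
    unfolding eq
  proof (rule borel_measurable_sum)
    fix i assume i: "i \<in> {..<d}"
    have d1: "(\<lambda>x. det (A x)) \<in> borel_measurable M" by (rule meas_det[OF car ent])
    have d2: "(\<lambda>x. det (mat_delete (A x) i i)) \<in> borel_measurable M"
    proof (rule meas_det)
      show "mat_delete (A x) i i \<in> carrier_mat (d-1) (d-1)" for x using mat_delete_carrier[OF car] .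
      fix j k assume j: "j < d - 1" and k: "k < d - 1"
      have dims: "dim_row (A x) = d" "dim_col (A x) = d" for x using car[of x] by auto
      have "(\<lambda>x. mat_delete (A x) i i $$ (j,k)) = (\<lambda>x. A x $$ (if j < i then j else Suc j, if k < i then k else Suc k))"
        using j k by (simp add: mat_delete_def fun_eq_iff dims)
      moreover have "(if j < i then j else Suc j) < d" "(if k < i then k else Suc k) < d" using j k by auto
      ultimately show "(\<lambda>x. mat_delete (A x) i i $$ (j,k)) \<in> borel_measurable M" using ent by simp
    qed
    show "(\<lambda>x. 1 / det (A x) * det (mat_delete (A x) i i)) \<in> borel_measurable M"
      by (rule borel_measurable_times[OF borel_measurable_divide[OF borel_measurable_const d1] d2])
  qed
qed

lemma meas_F:
  assumes z: "Im z > 0"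
  shows "(\<lambda>x. stieltjes_tr p (sample_mat p N (\<lambda>i j. x i j)) z) \<in> borel_measurable (PiM {..<N} (\<lambda>_. PiM {..<p} (\<lambda>_. borel :: real measure)))"
proof -
  let ?M = "PiM {..<N} (\<lambda>_. PiM {..<p} (\<lambda>_. borel :: real measure))"
  have comp: "(\<lambda>x. x i j) \<in> borel_measurable ?M" if i: "i < N" and j: "j < p" for i j
  proof -
    have "(\<lambda>x. x i) \<in> measurable ?M (PiM {..<p} (\<lambda>_. borel :: real measure))"
      using measurable_component_singleton[of i "{..<N}" "\<lambda>_. PiM {..<p} (\<lambda>_. borel :: real measure)"] i by simp
    moreover have "(\<lambda>y. y j) \<in> borel_measurable (PiM {..<p} (\<lambda>_. borel :: real measure))"
      using measurable_component_singleton[of j "{..<p}" "\<lambda>_. borel :: real measure"] j by simp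
    ultimately show ?thesis by (rule measurable_compose)
  qed
  have "(\<lambda>x. mat_trace (mat_inv (cA p z (sample_mat p N (\<lambda>i j. x i j))))) \<in> borel_measurable ?M"
  proof (rule meas_trace_inv)
    show "cA p z (sample_mat p N (\<lambda>i j. x i j)) \<in> carrier_mat p p" for x by (simp add: sample_mat_def)
    show "det (cA p z (sample_mat p N (\<lambda>i j. x i j))) \<noteq> 0" for x by (rule cA_det[OF sample_symm z])
    fix j k assume j: "j < p" and k: "k < p"
    have "(\<lambda>x. cA p z (sample_mat p N (\<lambda>i j. x i j)) $$ (j,k)) =
          (\<lambda>x. complex_of_real (\<Sum>i<N. x i j * x i k) - (if j = k then z else 0))"
      using j k by (simp add: fun_eq_iff cA_index sample_mat_def)
    moreover have "(\<lambda>x. complex_of_real (\<Sum>i<N. x i j * x i k) - (if j = k then z else 0)) \<in> borel_measurable ?M"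
    proof -
      have "(\<lambda>x. \<Sum>i<N. x i j * x i k) \<in> borel_measurable ?M"
        by (rule borel_measurable_sum) (use comp j k in auto)
      then have "(\<lambda>x. complex_of_real (\<Sum>i<N. x i j * x i k)) \<in> borel_measurable ?M"
        by (rule measurable_compose[OF _ borel_measurable_of_real])
      then show ?thesis by (intro borel_measurable_diff borel_measurable_const)
    qed
    ultimately show "(\<lambda>x. cA p z (sample_mat p N (\<lambda>i j. x i j)) $$ (j,k)) \<in> borel_measurable ?M" by simp
  qed
  then show ?thesis unfolding stieltjes_cA by (intro borel_measurable_divide borel_measurable_const)
qed




lemma sample_mat_cong:
  assumes "\<And>i j. i < N \<Longrightarrow> j < p \<Longrightarrow> R i j = R' i j"
  shows "sample_mat p N R = sample_mat p N R'"
  unfolding sample_mat_def using assms by (intro eq_matI) (auto intro!: sum.cong)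

lemma part_bound:
  fixes P :: "'a measure" and r :: "nat \<Rightarrow> 'a \<Rightarrow> nat \<Rightarrow> real" and h :: "complex \<Rightarrow> real"
  assumes P: "prob_space P"
    and indep: "prob_space.indep_vars P (\<lambda>_. PiM {..<p} (\<lambda>_. borel)) (\<lambda>i \<omega>. restrict (r i \<omega>) {..<p}) {..<N}"
    and z: "Im z > 0" and N: "N > 0" and p: "p > 0" and s: "s > 0"
    and hlin: "bounded_linear h" and hle: "\<And>a. \<bar>h a\<bar> \<le> cmod a"
  defines "m \<equiv> \<lambda>\<omega>. stieltjes_tr p (sample_mat p N (\<lambda>i. r i \<omega>)) z"
  shows "m \<in> borel_measurable P"
    and "measure P {\<omega> \<in> space P. s \<le> \<bar>h (m \<omega>) - (\<integral>\<omega>. h (m \<omega>) \<partial>P)\<bar>}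
          \<le> 2 * exp (- (s^2) / (2 * (real N * (2 / (real p * Im z))^2)))"
proof -
  interpret prob_space P by fact
  interpret h: bounded_linear h by fact
  let ?Q = "PiM {..<p} (\<lambda>_. borel :: real measure)"
  let ?\<Omega> = "PiM {..<N} (\<lambda>_. ?Q)"
  define Y where "Y i \<omega> = (if i < N then restrict (r i \<omega>) {..<p} else restrict (\<lambda>_. 0) {..<p})" for i \<omega>
  have Ym: "Y i \<in> measurable P ?Q" for i
  proof (cases "i < N")
    case True
    then have "(\<lambda>\<omega>. restrict (r i \<omega>) {..<p}) \<in> measurable P ?Q"
      using indep unfolding indep_vars_def2 by auto
    moreover have "Y i = (\<lambda>\<omega>. restrict (r i \<omega>) {..<p})" using True by (simp add: Y_def fun_eq_iff)
    ultimately show ?thesis by simp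
  next
    case False
    have "restrict (\<lambda>_. 0::real) {..<p} \<in> space ?Q" by (simp add: space_PiM)
    moreover have "Y i = (\<lambda>\<omega>. restrict (\<lambda>_. 0::real) {..<p})" using False by (simp add: Y_def fun_eq_iff)
    ultimately show ?thesis by simp
  qed
  define X where "X \<omega> = (\<lambda>i\<in>{..<N}. Y i \<omega>)" for \<omega>
  have Xm: "X \<in> measurable P ?\<Omega>" unfolding X_def by (rule measurable_restrict) (rule Ym)
  define F where "F x = stieltjes_tr p (sample_mat p N x) z" for x :: "nat \<Rightarrow> nat \<Rightarrow> real"
  have Fm: "F \<in> borel_measurable ?\<Omega>" unfolding F_def using meas_F[OF z, of p N] by simp
  have mF: "m \<omega> = F (X \<omega>)" for \<omega>
    unfolding m_def F_def by (rule arg_cong[where f="\<lambda>M. stieltjes_tr p M z"], rule sample_mat_cong) (simp add: X_def Y_def)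
  have mm: "m \<in> borel_measurable P"
  proof -
    have "m = (\<lambda>\<omega>. F (X \<omega>))" by (rule ext) (rule mF)
    moreover have "(\<lambda>\<omega>. F (X \<omega>)) \<in> borel_measurable P" by (rule measurable_compose[OF Xm Fm])
    ultimately show ?thesis by simp
  qed
  then show "m \<in> borel_measurable P" .
  have YY: "(\<lambda>\<omega>. restrict (r i \<omega>) {..<p}) = Y i" if "i \<in> {..<N}" for i
    using that by (simp add: Y_def fun_eq_iff)
  have indepY: "prob_space.indep_vars P (\<lambda>_. ?Q) Y {..<N}"
  proof -
    have "prob_space.indep_vars P (\<lambda>_. ?Q) (\<lambda>i \<omega>. restrict (r i \<omega>) {..<p}) {..<N} = prob_space.indep_vars P (\<lambda>_. ?Q) Y {..<N}"
      by (rule indep_vars_cong) (simp_all add: YY)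
    then show ?thesis using indep by simp
  qed
  define Mp where "Mp i = distr P ?Q (Y i)" for i
  have distrX: "distr P ?\<Omega> X = PiM {..<N} Mp"
  proof -
    have ne: "{..<N} \<noteq> {}" using N by auto
    show ?thesis unfolding X_def Mp_def
      by (rule indep_vars_iff_distr_eq_PiM[of "{..<N}" Y "\<lambda>_. ?Q", THEN iffD1, OF ne Ym indepY])
  qed
  have Mprob: "prob_space (Mp i)" for i unfolding Mp_def by (rule prob_space_distr[OF Ym])
  have sp: "space (PiM {..<N} Mp) = space ?\<Omega>" unfolding distrX[symmetric] by (rule space_distr)
  have setsPi: "sets (PiM {..<N} Mp) = sets ?\<Omega>" unfolding distrX[symmetric] by (rule sets_distr)
  define G where "G x = h (F x)" for x
  have hm: "h \<in> borel_measurable borel"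
    by (rule borel_measurable_continuous_onI[OF linear_continuous_on[OF hlin]])
  have Gm': "G \<in> borel_measurable ?\<Omega>" unfolding G_def by (rule measurable_compose[OF Fm hm])
  have Gm: "G \<in> borel_measurable (PiM {..<N} Mp)"
    by (subst measurable_cong_sets[OF setsPi refl]) (rule Gm')
  have Fb: "cmod (F x) \<le> 1 / Im z" for x unfolding F_def by (rule stieltjes_bound[OF p z])
  have GB: "\<bar>G x\<bar> \<le> 1 / Im z" for x using hle[of "F x"] Fb[of x] unfolding G_def by linarith
  have Gc: "\<bar>G x - G (x(i:=y))\<bar> \<le> 2 / (real p * Im z)" if "i < N" for i x y
  proof -
    have "\<bar>G x - G (x(i:=y))\<bar> = \<bar>h (F x - F (x(i:=y)))\<bar>" by (simp add: G_def h.diff)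
    also have "\<dots> \<le> cmod (F x - F (x(i:=y)))" by (rule hle)
    also have "\<dots> \<le> 2 / (real p * Im z)" unfolding F_def by (rule stieltjes_bd[OF p z that])
    finally show ?thesis .
  qed
  have Spos: "(\<Sum>i<N. (2 / (real p * Im z))^2) > 0" using N p z by simp
  have McD: "measure (PiM {..<N} Mp) {x \<in> space (PiM {..<N} Mp). s \<le> \<bar>G x - (\<integral>y. G y \<partial>PiM {..<N} Mp)\<bar>}
          \<le> 2 * exp (- (s^2) / (2 * (\<Sum>i<N. (2 / (real p * Im z))^2)))"
  proof (rule mcdiarmid_abs[where c="\<lambda>_. 2 / (real p * Im z)" and B="1 / Im z"])
    show "prob_space (Mp i)" for i by (rule Mprob)
    show "G \<in> borel_measurable (PiM {..<N} Mp)" by (rule Gm)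
    show "\<bar>G x\<bar> \<le> 1 / Im z" for x by (rule GB)
    show "\<bar>G x - G (x(i:=y))\<bar> \<le> 2 / (real p * Im z)" if "i < N" for i x y by (rule Gc[OF that])
    show "(\<Sum>i<N. (2 / (real p * Im z))^2) > 0" by (rule Spos)
    show "s > 0" by (rule s)
  qed
  have EG: "(\<integral>y. G y \<partial>PiM {..<N} Mp) = (\<integral>\<omega>. h (m \<omega>) \<partial>P)"
  proof -
    have "(\<integral>y. G y \<partial>PiM {..<N} Mp) = (\<integral>y. G y \<partial>distr P ?\<Omega> X)" by (simp add: distrX)
    also have "\<dots> = (\<integral>\<omega>. G (X \<omega>) \<partial>P)"
      by (rule integral_distr[OF Xm Gm'])
    also have "\<dots> = (\<integral>\<omega>. h (m \<omega>) \<partial>P)" by (simp add: G_def mF)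
    finally show ?thesis .
  qed
  define c0 where "c0 = (\<integral>\<omega>. h (m \<omega>) \<partial>P)"
  have setm: "{x \<in> space ?\<Omega>. s \<le> \<bar>G x - c0\<bar>} \<in> sets ?\<Omega>"
  proof -
    have "(\<lambda>x. \<bar>G x - c0\<bar>) \<in> borel_measurable ?\<Omega>"
      by (intro borel_measurable_abs borel_measurable_diff Gm' borel_measurable_const)
    then show ?thesis by (rule borel_measurable_le[OF borel_measurable_const])
  qed
  have "measure P {\<omega> \<in> space P. s \<le> \<bar>h (m \<omega>) - c0\<bar>} = measure P (X -` {x \<in> space ?\<Omega>. s \<le> \<bar>G x - c0\<bar>} \<inter> space P)"
    using measurable_space[OF Xm] by (intro arg_cong[where f="measure P"]) (auto simp: G_def mF)
  also have "\<dots> = measure (distr P ?\<Omega> X) {x \<in> space ?\<Omega>. s \<le> \<bar>G x - c0\<bar>}"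
    by (rule measure_distr[OF Xm setm, symmetric])
  also have "\<dots> = measure (PiM {..<N} Mp) {x \<in> space (PiM {..<N} Mp). s \<le> \<bar>G x - (\<integral>y. G y \<partial>PiM {..<N} Mp)\<bar>}"
    unfolding distrX sp EG c0_def ..
  finally show "measure P {\<omega> \<in> space P. s \<le> \<bar>h (m \<omega>) - (\<integral>\<omega>. h (m \<omega>) \<partial>P)\<bar>}
          \<le> 2 * exp (- (s^2) / (2 * (real N * (2 / (real p * Im z))^2)))"
    using McD by (simp add: c0_def)
qed




lemma dev_bound:
  fixes P :: "'a measure" and r :: "nat \<Rightarrow> 'a \<Rightarrow> nat \<Rightarrow> real"
  assumes P: "prob_space P"
    and indep: "prob_space.indep_vars P (\<lambda>_. PiM {..<p} (\<lambda>_. borel)) (\<lambda>i \<omega>. restrict (r i \<omega>) {..<p}) {..<N}"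
    and z: "Im z > 0" and N: "N > 0" and p: "p > 0" and t: "t > 0"
  defines "m \<equiv> \<lambda>\<omega>. stieltjes_tr p (sample_mat p N (\<lambda>i. r i \<omega>)) z"
  shows "m \<in> borel_measurable P"
    and "measure P {\<omega> \<in> space P. t \<le> cmod (m \<omega> - integral\<^sup>L P m)}
          \<le> 4 * exp (- (t^2 * (real p)^2 * (Im z)^2 / (32 * real N)))"
proof -
  interpret prob_space P by fact
  have t2: "t / 2 > 0" using t by simp
  have mm: "m \<in> borel_measurable P" unfolding m_def
    by (rule part_bound(1)[OF P indep z N p t2 bounded_linear_Re abs_Re_le_cmod])
  then show "m \<in> borel_measurable P" .
  have int: "integrable P m"
  proof (rule integrable_const_bound[where B="1 / Im z"])
    show "AE x in P. norm (m x) \<le> 1 / Im z"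
      by (rule AE_I2) (simp add: m_def stieltjes_bound[OF p z])
  qed (rule mm)
  have ERe: "(\<integral>\<omega>. Re (m \<omega>) \<partial>P) = Re (integral\<^sup>L P m)"
    by (rule integral_bounded_linear[OF bounded_linear_Re int])
  have EIm: "(\<integral>\<omega>. Im (m \<omega>) \<partial>P) = Im (integral\<^sup>L P m)"
    by (rule integral_bounded_linear[OF bounded_linear_Im int])
  define S where "S = real N * (2 / (real p * Im z))^2"
  define A1 where "A1 = {\<omega> \<in> space P. t / 2 \<le> \<bar>Re (m \<omega>) - (\<integral>\<omega>. Re (m \<omega>) \<partial>P)\<bar>}"
  define A2 where "A2 = {\<omega> \<in> space P. t / 2 \<le> \<bar>Im (m \<omega>) - (\<integral>\<omega>. Im (m \<omega>) \<partial>P)\<bar>}"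
  have B1: "measure P A1 \<le> 2 * exp (- ((t/2)^2) / (2 * S))" unfolding A1_def S_def m_def
    by (rule part_bound(2)[OF P indep z N p t2 bounded_linear_Re abs_Re_le_cmod])
  have B2: "measure P A2 \<le> 2 * exp (- ((t/2)^2) / (2 * S))" unfolding A2_def S_def m_def
    by (rule part_bound(2)[OF P indep z N p t2 bounded_linear_Im abs_Im_le_cmod])
  have A1m: "A1 \<in> sets P" unfolding A1_def using mm by measurable
  have A2m: "A2 \<in> sets P" unfolding A2_def using mm by measurable
  have sub: "{\<omega> \<in> space P. t \<le> cmod (m \<omega> - integral\<^sup>L P m)} \<subseteq> A1 \<union> A2"
  proof
    fix \<omega> assume "\<omega> \<in> {\<omega> \<in> space P. t \<le> cmod (m \<omega> - integral\<^sup>L P m)}"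
    then have w: "\<omega> \<in> space P" and le: "t \<le> cmod (m \<omega> - integral\<^sup>L P m)" by auto
    have "cmod (m \<omega> - integral\<^sup>L P m) \<le> \<bar>Re (m \<omega>) - (\<integral>\<omega>. Re (m \<omega>) \<partial>P)\<bar> + \<bar>Im (m \<omega>) - (\<integral>\<omega>. Im (m \<omega>) \<partial>P)\<bar>"
      using cmod_le[of "m \<omega> - integral\<^sup>L P m"] by (simp add: ERe EIm)
    with le w show "\<omega> \<in> A1 \<union> A2" unfolding A1_def A2_def by auto
  qed
  have "measure P {\<omega> \<in> space P. t \<le> cmod (m \<omega> - integral\<^sup>L P m)} \<le> measure P (A1 \<union> A2)"
    by (rule finite_measure_mono[OF sub]) (use A1m A2m in auto)
  also have "\<dots> \<le> measure P A1 + measure P A2" by (rule measure_Un_le[OF A1m A2m])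
  also have "\<dots> \<le> 2 * exp (- ((t/2)^2) / (2 * S)) + 2 * exp (- ((t/2)^2) / (2 * S))"
    by (intro add_mono B1 B2)
  also have "- ((t/2)^2) / (2 * S) = - (t^2 * (real p)^2 * (Im z)^2 / (32 * real N))"
    unfolding S_def using N p z by (simp add: field_simps power2_eq_square)
  finally show "measure P {\<omega> \<in> space P. t \<le> cmod (m \<omega> - integral\<^sup>L P m)}
          \<le> 4 * exp (- (t^2 * (real p)^2 * (Im z)^2 / (32 * real N)))" by simp
qed




lemma ln_le_sqrt:
  fixes x :: real assumes x: "x \<ge> 1" shows "ln x \<le> sqrt x"
proof -
  have s: "sqrt x > 0" using x by simp
  have a: "ln x = 2 * ln (sqrt x)" using x by (simp add: ln_sqrt)
  have b: "ln (sqrt x) = ln (sqrt x / 2) + ln 2" using s by (simp add: ln_div)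
  have c: "ln (sqrt x / 2) \<le> sqrt x / 2 - 1" using s by (intro ln_le_minus_one) simp
  have d: "ln (2::real) < 1" by (rule ln_2_less_1)
  from a b c d show ?thesis by linarith
qed

lemma seq_zero_from_eps:
  fixes f :: "nat \<Rightarrow> real"
  assumes nn: "\<And>p. f p \<ge> 0" and H: "\<forall>k::nat. eventually (\<lambda>p. f p < 1 / (real k + 1)) sequentially"
  shows "f \<longlonglongrightarrow> 0"
  unfolding LIMSEQ_iff
proof (intro allI impI)
  fix r :: real assume r: "r > 0"
  obtain k where k: "inverse (real (Suc k)) < r" using reals_Archimedean[OF r] by blast
  have "eventually (\<lambda>p. f p < 1 / (real k + 1)) sequentially" using H by blast
  then obtain no where no: "\<And>p. p \<ge> no \<Longrightarrow> f p < 1 / (real k + 1)" unfolding eventually_sequentially by blast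
  show "\<exists>no. \<forall>n\<ge>no. norm (f n - 0) < r"
  proof (intro exI allI impI)
    fix p assume "no \<le> p"
    then have "f p < 1 / (real k + 1)" by (rule no)
    also have "1 / (real k + 1) = inverse (real (Suc k))" by (simp add: divide_inverse add.commute)
    finally show "norm (f p - 0) < r" using nn[of p] k by simp
  qed
qed




theorem corollary2:
  fixes P :: "'a measure"
    and n :: "nat \<Rightarrow> nat"
    and r :: "nat \<Rightarrow> nat \<Rightarrow> 'a \<Rightarrow> (nat \<Rightarrow> real)"
  assumes "prob_space P"
    and indep: "\<And>p. prob_space.indep_vars P (\<lambda>_. PiM {..<p} (\<lambda>_. borel))
                  (\<lambda>i \<omega>. restrict (r p i \<omega>) {..<p}) {..<n p}"
    and ratio: "\<exists>c>0. \<forall>p\<ge>1. real p / real (n p) \<ge> c"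
  defines "m \<equiv> \<lambda>p z \<omega>. stieltjes_tr p (sample_mat p (n p) (\<lambda>i. r p i \<omega>)) z"
  shows "\<forall>z. Im z > 0 \<longrightarrow>
           (AE \<omega> in P. ((\<lambda>p. m p z \<omega> - integral\<^sup>L P (m p z)) \<longlonglongrightarrow> 0)) \<and>
           (\<forall>\<alpha>>0. AE \<omega> in P.
              ((\<lambda>p. sqrt (real p) / (ln (real p)) powr ((1 + \<alpha>) / 2)
                     * cmod (m p z \<omega> - integral\<^sup>L P (m p z))) \<longlonglongrightarrow> 0))"
proof (intro allI impI)
  fix z :: complex assume z: "Im z > 0"
  interpret prob_space P by fact
  obtain c where c: "c > 0" and cr: "\<And>p. p \<ge> 1 \<Longrightarrow> real p / real (n p) \<ge> c" using ratio by auto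
  have Npos: "n p > 0" if "p \<ge> 1" for p
  proof (rule ccontr)
    assume "\<not> n p > 0" then have "n p = 0" by simp
    then have "real p / real (n p) = 0" by simp
    with cr[OF that] c show False by simp
  qed
  define D where "D p \<omega> = m p z \<omega> - integral\<^sup>L P (m p z)" for p \<omega>
  define K where "K = c * (Im z)^2 / 32"
  have K: "K > 0" using c z by (simp add: K_def)
  have mmeas: "m p z \<in> borel_measurable P" for p
  proof (cases "p = 0")
    case True
    then have "m p z = (\<lambda>\<omega>. 0)" by (simp add: m_def stieltjes_tr_def fun_eq_iff)
    then show ?thesis by simp
  next
    case False
    then have p1: "p \<ge> 1" and pp: "p > 0" by auto
    show ?thesis unfolding m_def
      using dev_bound(1)[OF assms(1) indep[of p] z Npos[OF p1] pp, of 1] by simp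
  qed
  have tail: "measure P {\<omega> \<in> space P. t \<le> cmod (D p \<omega>)} \<le> 4 * exp (- (K * t^2 * real p))"
    if p1: "p \<ge> 1" and t: "t > 0" for p t
  proof -
    have pp: "p > 0" using p1 by simp
    have "measure P {\<omega> \<in> space P. t \<le> cmod (D p \<omega>)} \<le> 4 * exp (- (t^2 * (real p)^2 * (Im z)^2 / (32 * real (n p))))"
      unfolding D_def m_def by (rule dev_bound(2)[OF assms(1) indep[of p] z Npos[OF p1] pp t])
    also have "\<dots> \<le> 4 * exp (- (K * t^2 * real p))"
    proof -
      have cr': "c \<le> real p / real (n p)" by (rule cr[OF p1])
      have "K * t^2 * real p = (t^2 * real p * (Im z)^2 / 32) * c" by (simp add: K_def)
      also have "\<dots> \<le> (t^2 * real p * (Im z)^2 / 32) * (real p / real (n p))"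
        by (rule mult_left_mono[OF cr']) simp
      also have "\<dots> = t^2 * (real p)^2 * (Im z)^2 / (32 * real (n p))" by (simp add: power2_eq_square)
      finally show ?thesis by simp
    qed
    finally show ?thesis .
  qed
  have main: "AE \<omega> in P. (\<lambda>p. sqrt (real p) / (ln (real p)) powr ((1 + \<alpha>) / 2) * cmod (D p \<omega>)) \<longlonglongrightarrow> 0"
    if \<alpha>: "\<alpha> > 0" for \<alpha>
  proof -
    define a where "a p = sqrt (real p) / (ln (real p)) powr ((1 + \<alpha>) / 2)" for p :: nat
    have a0: "a p \<ge> 0" for p unfolding a_def by simp
    have ev: "AE \<omega> in P. eventually (\<lambda>p. a p * cmod (D p \<omega>) < \<epsilon>) sequentially" if \<epsilon>: "\<epsilon> > 0" for \<epsilon>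
    proof -
      define A where "A p = {\<omega> \<in> space P. \<epsilon> \<le> a p * cmod (D p \<omega>)}" for p
      have Am: "A p \<in> sets P" for p
      proof -
        have "(\<lambda>\<omega>. a p * cmod (D p \<omega>)) \<in> borel_measurable P" unfolding D_def using mmeas[of p] by measurable
        then show ?thesis unfolding A_def by (rule borel_measurable_le[OF borel_measurable_const])
      qed
      have Afin: "emeasure P (A p) < \<infinity>" for p by (simp add: emeasure_eq_measure)
      have Asum: "summable (\<lambda>p. measure P (A p))"
      proof (rule summable_comparison_test_ev)
        show "summable (\<lambda>p. 4 * inverse (real p ^ 2))"
          by (rule summable_mult[OF inverse_power_summable]) simp
        define L0 where "L0 = (2 / (K * \<epsilon>^2)) powr (1 / \<alpha>)"
        define P0 where "P0 = max 2 (nat \<lceil>exp L0\<rceil>)"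
        show "eventually (\<lambda>p. norm (measure P (A p)) \<le> 4 * inverse (real p ^ 2)) sequentially"
          unfolding eventually_sequentially
        proof (intro exI allI impI)
          fix p assume pP0: "P0 \<le> p"
          have p2: "real p \<ge> 2" using pP0 by (simp add: P0_def)
          have p1: "p \<ge> 1" using p2 by simp
          define L where "L = ln (real p)"
          have L: "L > 0" using p2 by (simp add: L_def)
          have "exp L0 \<le> real (nat \<lceil>exp L0\<rceil>)" by (rule real_nat_ceiling_ge)
          also have "\<dots> \<le> real p"
          proof -
            have "nat \<lceil>exp L0\<rceil> \<le> p" using pP0 unfolding P0_def max.bounded_iff by blast
            then show ?thesis by (rule of_nat_mono)
          qed
          finally have "exp L0 \<le> exp L" using p2 by (simp add: L_def)
          then have LL0: "L0 \<le> L" by simp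
          have apos: "a p > 0" unfolding a_def using p2 L by (simp add: L_def)
          have Aeq: "A p = {\<omega> \<in> space P. \<epsilon> / a p \<le> cmod (D p \<omega>)}"
            unfolding A_def using apos by (auto simp: pos_divide_le_eq mult.commute)
          have tpos: "\<epsilon> / a p > 0" using \<epsilon> apos by simp
          have sq: "(\<epsilon> / a p)^2 * real p = \<epsilon>^2 * L powr (1 + \<alpha>)"
          proof -
            have e1: "(L powr ((1 + \<alpha>)/2))^2 = L powr (1 + \<alpha>)"
              using L by (simp add: power2_eq_square powr_add[symmetric])
            have e2: "(sqrt (real p))^2 = real p" by simp
            have "(\<epsilon> / a p)^2 = \<epsilon>^2 * (L powr ((1 + \<alpha>)/2))^2 / (sqrt (real p))^2"
              unfolding a_def L_def by (simp add: power_divide power_mult_distrib)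
            also have "\<dots> = \<epsilon>^2 * L powr (1 + \<alpha>) / real p" by (simp only: e1 e2)
            finally show ?thesis using p2 by simp
          qed
          have "measure P (A p) \<le> 4 * exp (- (K * (\<epsilon> / a p)^2 * real p))"
            unfolding Aeq by (rule tail[OF p1 tpos])
          also have "K * (\<epsilon> / a p)^2 * real p = K * \<epsilon>^2 * L powr (1 + \<alpha>)"
            using sq by (simp add: mult.assoc)
          also have "4 * exp (- (K * \<epsilon>^2 * L powr (1 + \<alpha>))) \<le> 4 * exp (- (2 * L))"
          proof -
            have Ke: "K * \<epsilon>^2 > 0" using K \<epsilon> by simp
            have "L0 powr \<alpha> \<le> L powr \<alpha>"
              by (rule powr_mono2) (use \<alpha> LL0 in \<open>auto simp: L0_def\<close>)
            moreover have "L0 powr \<alpha> = 2 / (K * \<epsilon>^2)" unfolding L0_def using \<alpha> Ke by (simp add: powr_powr)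
            ultimately have La: "2 / (K * \<epsilon>^2) \<le> L powr \<alpha>" by simp
            have pw: "L powr (1 + \<alpha>) = L * L powr \<alpha>" using L by (simp add: powr_add)
            have h2: "(K * \<epsilon>^2) * L powr \<alpha> \<ge> 2"
            proof -
              define \<kappa> where "\<kappa> = K * \<epsilon>^2"
              have k: "\<kappa> > 0" using Ke by (simp add: \<kappa>_def)
              have "\<kappa> * (2 / \<kappa>) \<le> \<kappa> * L powr \<alpha>"
                by (rule mult_left_mono) (use La k in \<open>simp_all add: \<kappa>_def\<close>)
              moreover have "\<kappa> * (2 / \<kappa>) = 2" using k by simp
              ultimately show ?thesis by (simp add: \<kappa>_def)
            qed
            have "L * 2 \<le> L * ((K * \<epsilon>^2) * L powr \<alpha>)" by (rule mult_left_mono[OF h2]) (use L in simp)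
            also have "\<dots> = K * \<epsilon>^2 * L powr (1 + \<alpha>)" unfolding pw by (simp only: mult_ac)
            finally have "K * \<epsilon>^2 * L powr (1 + \<alpha>) \<ge> L * 2" .
            then show ?thesis by simp
          qed
          also have "4 * exp (- (2 * L)) = 4 * inverse (real p ^ 2)"
          proof -
            have eL: "exp L = real p" using p2 by (simp add: L_def)
            have e2: "exp (2 * L) = exp L ^ 2" using exp_of_nat_mult[of 2 L] by simp
            have "exp (- (2 * L)) = inverse (exp (2 * L))" by (rule exp_minus)
            then have "exp (- (2 * L)) = inverse (real p ^ 2)" by (simp only: e2 eL)
            then show ?thesis by simp
          qed
          finally show "norm (measure P (A p)) \<le> 4 * inverse (real p ^ 2)" by simp
        qed
      qed
      have "AE \<omega> in P. eventually (\<lambda>p. \<omega> \<in> space P - A p) sequentially"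
        by (rule borel_cantelli_AE1[OF Am Afin Asum])
      then show ?thesis
      proof (rule AE_mp[OF _ AE_I2], intro impI)
        fix \<omega> assume w: "\<omega> \<in> space P" and e: "eventually (\<lambda>p. \<omega> \<in> space P - A p) sequentially"
        show "eventually (\<lambda>p. a p * cmod (D p \<omega>) < \<epsilon>) sequentially"
          using e by (rule eventually_mono) (use w in \<open>auto simp: A_def\<close>)
      qed
    qed
    have "AE \<omega> in P. \<forall>k::nat. eventually (\<lambda>p. a p * cmod (D p \<omega>) < 1 / (real k + 1)) sequentially"
      unfolding AE_all_countable by (intro allI ev) simp
    then show ?thesis
    proof (rule AE_mp[OF _ AE_I2], intro impI)
      fix \<omega> assume "\<forall>k::nat. eventually (\<lambda>p. a p * cmod (D p \<omega>) < 1 / (real k + 1)) sequentially"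
      then have "(\<lambda>p. a p * cmod (D p \<omega>)) \<longlonglongrightarrow> 0"
        by (intro seq_zero_from_eps) (use a0 in simp_all)
      then show "(\<lambda>p. sqrt (real p) / (ln (real p)) powr ((1 + \<alpha>) / 2) * cmod (D p \<omega>)) \<longlonglongrightarrow> 0"
        by (simp add: a_def)
    qed
  qed
  have first: "AE \<omega> in P. (\<lambda>p. D p \<omega>) \<longlonglongrightarrow> 0"
  proof -
    have "AE \<omega> in P. (\<lambda>p. sqrt (real p) / (ln (real p)) powr ((1 + 1) / 2) * cmod (D p \<omega>)) \<longlonglongrightarrow> 0"
      by (rule main) simp
    then show ?thesis
    proof (rule AE_mp[OF _ AE_I2], intro impI)
      fix \<omega> assume H: "(\<lambda>p. sqrt (real p) / (ln (real p)) powr ((1 + 1) / 2) * cmod (D p \<omega>)) \<longlonglongrightarrow> 0"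
      have "(\<lambda>p. cmod (D p \<omega>)) \<longlonglongrightarrow> 0"
      proof (rule tendsto_sandwich[OF _ _ tendsto_const H])
        show "eventually (\<lambda>p. 0 \<le> cmod (D p \<omega>)) sequentially" by simp
        show "eventually (\<lambda>p. cmod (D p \<omega>) \<le> sqrt (real p) / (ln (real p)) powr ((1 + 1) / 2) * cmod (D p \<omega>)) sequentially"
          unfolding eventually_sequentially
        proof (intro exI allI impI)
          fix p :: nat assume "2 \<le> p"
          then have p2: "real p \<ge> 2" by simp
          have lnp: "ln (real p) > 0" using p2 by simp
          have "ln (real p) \<le> sqrt (real p)" by (rule ln_le_sqrt) (use p2 in simp)
          then have "1 \<le> sqrt (real p) / ln (real p)" using lnp by simp
          moreover have "ln (real p) powr ((1 + 1) / 2) = ln (real p)" using lnp by simp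
          ultimately show "cmod (D p \<omega>) \<le> sqrt (real p) / (ln (real p)) powr ((1 + 1) / 2) * cmod (D p \<omega>)"
            using mult_right_mono[of 1 "sqrt (real p) / ln (real p)" "cmod (D p \<omega>)"] by simp
        qed
      qed
      then show "(\<lambda>p. D p \<omega>) \<longlonglongrightarrow> 0" by (simp add: tendsto_norm_zero_iff)
    qed
  qed
  show "(AE \<omega> in P. ((\<lambda>p. m p z \<omega> - integral\<^sup>L P (m p z)) \<longlonglongrightarrow> 0)) \<and>
           (\<forall>\<alpha>>0. AE \<omega> in P.
              ((\<lambda>p. sqrt (real p) / (ln (real p)) powr ((1 + \<alpha>) / 2)
                     * cmod (m p z \<omega> - integral\<^sup>L P (m p z))) \<longlonglongrightarrow> 0))"
    using first main unfolding D_def by blast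
qed


end
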